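(* Let $(W,\odot,\mathbb{1})$ be a monoid and let $(M,+,\mathbb{0},\otimes)$ be an $\omega$-continuous (left) $W$-module, with module of weightings $\mathrm{Wt}=M^\Sigma$. For every $W$-wgcl program $C$, the transformer $\mathrm{wp}[\![C]\!]$ is (1) monotone: for all $f,g\in\mathrm{Wt}$, $f\preceq g$ implies $\mathrm{wp}[\![C]\!](f)\preceq\mathrm{wp}[\![C]\!](g)$; (2) strict: $\mathrm{wp}[\![C]\!](\mathbb{0})=\mathbb{0}$; (3) additive: for all $f,g\in\mathrm{Wt}$, $\mathrm{wp}[\![C]\!](f+g)=\mathrm{wp}[\![C]\!](f)+\mathrm{wp}[\![C]\!](g)$; (4) if moreover the monoid $W$ is commutative, then $\mathrm{wp}$ is homogeneous: for all $a\in W$ and $f\in\mathrm{Wt}$, $\mathrm{wp}[\![C]\!](a\otimes f)=a\otimes\mathrm{wp}[\![C]\!](f)$ (so that, together with (3), $\mathrm{wp}[\![C]\!]$ is linear).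
   Context: A (left) module over a monoid $(W,\odot,\mathbb{1})$ is a commutative monoid $(M,+,\mathbb{0})$ with an action $\otimes\colon W\times M\to M$ such that $(v\odot w)\otimes a=v\otimes(w\otimes a)$, $v\otimes(a+b)=(v\otimes a)+(v\otimes b)$, $\mathbb{1}\otimes a=a$ and $v\otimes\mathbb{0}=\mathbb{0}$ for all $v,w\in W$, $a,b\in M$. The natural order on $M$ is $a\preceq b$ iff there is $c\in M$ with $a+c=b$; $M$ is naturally ordered if $\preceq$ is a partial order. $M$ is $\omega$-continuous if it is naturally ordered, every increasing $\omega$-chain in $(M,\preceq)$ has a supremum, and addition (in each argument) and, for each fixed $w\in W$, the map $a\mapsto w\otimes a$ preserve suprema of increasing $\omega$-chains. Program states: $\Sigma$ is the set of states (maps from program variables to values); an expression $E$ has value $E(\sigma)$ in state $\sigma$; guards $\varphi$ are predicates on states; $\sigma[x\mapsto v]$ is $\sigma$ with $x$ updated to $v$. $W$-wgcl programs are generated by $C::= x:=E \mid C;C \mid \mathtt{if}(\varphi)\{C\}\mathtt{else}\{C\} \mid \{C\}\oplus\{C\} \mid \mathtt{weight}\ a\ (a\in W) \mid \mathtt{while}(\varphi)\{C\}$. Weightings: $\mathrm{Wt}=M^{\Sigma}$ with pointwise addition, zero $\mathbb{0}$, scalar multiplication $(a\otimes f)(\sigma)=a\otimes f(\sigma)$ and pointwise natural order $\preceq$. $([\varphi]\cdot f)(\sigma)=f(\sigma)$ if $\sigma\models\varphi$ and $\mathbb{0}$ otherwise; $f[x/E](\sigma)=f(\sigma[x\mapsto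 E(\sigma)])$. The weakest preweighting transformer: $\mathrm{wp}[\![x:=E]\!](f)=f[x/E]$; $\mathrm{wp}[\![C_1;C_2]\!](f)=\mathrm{wp}[\![C_1]\!](\mathrm{wp}[\![C_2]\!](f))$; $\mathrm{wp}[\![\mathtt{if}(\varphi)\{C_1\}\mathtt{else}\{C_2\}]\!](f)=[\varphi]\cdot\mathrm{wp}[\![C_1]\!](f)+[\neg\varphi]\cdot\mathrm{wp}[\![C_2]\!](f)$; $\mathrm{wp}[\![\{C_1\}\oplus\{C_2\}]\!](f)=\mathrm{wp}[\![C_1]\!](f)+\mathrm{wp}[\![C_2]\!](f)$; $\mathrm{wp}[\![\mathtt{weight}\ a]\!](f)=a\otimes f$; $\mathrm{wp}[\![\mathtt{while}(\varphi)\{C'\}]\!](f)$ is the least fixed point (w.r.t. $\preceq$) of $X\mapsto[\neg\varphi]\cdot f+[\varphi]\cdot\mathrm{wp}[\![C']\!](X)$. *)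

theory Defs
  imports Main
begin

definition nat_le :: "'m::comm_monoid_add \<Rightarrow> 'm \<Rightarrow> bool" where
  "nat_le a b \<longleftrightarrow> (\<exists>c. a + c = b)"

definition is_module :: "('w::monoid_mult \<Rightarrow> 'm::comm_monoid_add \<Rightarrow> 'm) \<Rightarrow> bool" where
  "is_module act \<longleftrightarrow>
     (\<forall>(v::'w) w (a::'m). act (v * w) a = act v (act w a)) \<and>
     (\<forall>(v::'w) (a::'m) b. act v (a + b) = act v a + act v b) \<and>
     (\<forall>a::'m. act 1 a = a) \<and>
     (\<forall>v::'w. act v 0 = 0)"

definition naturally_ordered :: "'m::comm_monoid_add itself \<Rightarrow> bool" where
  "naturally_ordered _ \<longleftrightarrow> (\<forall>a b::'m. nat_le a b \<and> nat_le b a \<longrightarrow> a = b)"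
  \<comment> \<open>reflexivity and transitivity of nat_le always hold; partial order = antisymmetry\<close>

definition omega_chain :: "(nat \<Rightarrow> 'm::comm_monoid_add) \<Rightarrow> bool" where
  "omega_chain c \<longleftrightarrow> (\<forall>n. nat_le (c n) (c (Suc n)))"

definition is_sup :: "(nat \<Rightarrow> 'm::comm_monoid_add) \<Rightarrow> 'm \<Rightarrow> bool" where
  "is_sup c s \<longleftrightarrow> (\<forall>n. nat_le (c n) s) \<and> (\<forall>u. (\<forall>n. nat_le (c n) u) \<longrightarrow> nat_le s u)"

definition omega_cont_module :: "('w::monoid_mult \<Rightarrow> 'm::comm_monoid_add \<Rightarrow> 'm) \<Rightarrow> bool" where
  "omega_cont_module act \<longleftrightarrow>
     is_module act \<and>
     naturally_ordered TYPE('m) \<and>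
     (\<forall>c::nat \<Rightarrow> 'm. omega_chain c \<longrightarrow> (\<exists>s. is_sup c s)) \<and>
     (\<forall>(c::nat \<Rightarrow> 'm) s a. omega_chain c \<longrightarrow> is_sup c s \<longrightarrow> is_sup (\<lambda>n. a + c n) (a + s)) \<and>
     (\<forall>(c::nat \<Rightarrow> 'm) s a. omega_chain c \<longrightarrow> is_sup c s \<longrightarrow> is_sup (\<lambda>n. c n + a) (s + a)) \<and>
     (\<forall>(c::nat \<Rightarrow> 'm) s w. omega_chain c \<longrightarrow> is_sup c s \<longrightarrow> is_sup (\<lambda>n. act w (c n)) (act w s))"

text \<open>States: maps from program variables 'v to values 'a. Expressions are
  functions from states to values, guards are predicates on states.\<close>

datatype ('v, 'a, 'w) wgcl =
    Assign 'v "('v \<Rightarrow> 'a) \<Rightarrow> 'a"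
  | Seq "('v, 'a, 'w) wgcl" "('v, 'a, 'w) wgcl"
  | Ite "('v \<Rightarrow> 'a) \<Rightarrow> bool" "('v, 'a, 'w) wgcl" "('v, 'a, 'w) wgcl"
  | Branch "('v, 'a, 'w) wgcl" "('v, 'a, 'w) wgcl"
  | Weight 'w
  | While "('v \<Rightarrow> 'a) \<Rightarrow> bool" "('v, 'a, 'w) wgcl"

definition wt_le :: "('s \<Rightarrow> 'm::comm_monoid_add) \<Rightarrow> ('s \<Rightarrow> 'm) \<Rightarrow> bool" where
  "wt_le f g \<longleftrightarrow> (\<forall>\<sigma>. nat_le (f \<sigma>) (g \<sigma>))"

definition iv :: "('s \<Rightarrow> bool) \<Rightarrow> ('s \<Rightarrow> 'm::comm_monoid_add) \<Rightarrow> 's \<Rightarrow> 'm" where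
  "iv \<phi> f = (\<lambda>\<sigma>. if \<phi> \<sigma> then f \<sigma> else 0)"

definition wt_lfp :: "(('s \<Rightarrow> 'm::comm_monoid_add) \<Rightarrow> ('s \<Rightarrow> 'm)) \<Rightarrow> ('s \<Rightarrow> 'm)" where
  "wt_lfp \<Phi> = (THE X. \<Phi> X = X \<and> (\<forall>Y. \<Phi> Y = Y \<longrightarrow> wt_le X Y))"

primrec wp :: "('w::monoid_mult \<Rightarrow> 'm::comm_monoid_add \<Rightarrow> 'm) \<Rightarrow> ('v, 'a, 'w) wgcl
               \<Rightarrow> (('v \<Rightarrow> 'a) \<Rightarrow> 'm) \<Rightarrow> (('v \<Rightarrow> 'a) \<Rightarrow> 'm)" where
  "wp act (Assign x E) f = (\<lambda>\<sigma>. f (\<sigma>(x := E \<sigma>)))"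
| "wp act (Seq C1 C2) f = wp act C1 (wp act C2 f)"
| "wp act (Ite \<phi> C1 C2) f =
     (\<lambda>\<sigma>. iv \<phi> (wp act C1 f) \<sigma> + iv (\<lambda>\<tau>. \<not> \<phi> \<tau>) (wp act C2 f) \<sigma>)"
| "wp act (Branch C1 C2) f = (\<lambda>\<sigma>. wp act C1 f \<sigma> + wp act C2 f \<sigma>)"
| "wp act (Weight a) f = (\<lambda>\<sigma>. act a (f \<sigma>))"
| "wp act (While \<phi> C) f =
     wt_lfp (\<lambda>X \<sigma>. iv (\<lambda>\<tau>. \<not> \<phi> \<tau>) f \<sigma> + iv \<phi> (wp act C X) \<sigma>)"

end

theory Submission
  imports Defs
begin

section \<open>Order basics\<close>

lemma nat_le_refl: "nat_le a a"
  unfolding nat_le_def by (rule exI[of _ 0]) simp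

lemma nat_le_trans: "nat_le a b \<Longrightarrow> nat_le b c \<Longrightarrow> nat_le a c"
  unfolding nat_le_def by (metis add.assoc)

lemma nat_le_0: "nat_le 0 a"
  unfolding nat_le_def by auto

lemma nat_le_add: "nat_le a b \<Longrightarrow> nat_le c d \<Longrightarrow> nat_le (a + c) (b + d)"
  unfolding nat_le_def
proof -
  assume "\<exists>x. a + x = b" "\<exists>y. c + y = d"
  then obtain x y where "a + x = b" "c + y = d" by blast
  have "(a + c) + (x + y) = (a + x) + (c + y)" by (simp add: ac_simps)
  then have "(a + c) + (x + y) = b + d" using \<open>a + x = b\<close> \<open>c + y = d\<close> by simp
  then show "\<exists>z. a + c + z = b + d" by blast
qed

lemma mod_mult: "omega_cont_module act \<Longrightarrow> act (v * w) a = act v (act w a)"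
  unfolding omega_cont_module_def is_module_def by blast
lemma mod_add: "omega_cont_module act \<Longrightarrow> act v (a + b) = act v a + act v b"
  unfolding omega_cont_module_def is_module_def by blast
lemma mod_0: "omega_cont_module act \<Longrightarrow> act v 0 = 0"
  unfolding omega_cont_module_def is_module_def by blast

lemma antisym: "omega_cont_module (act :: 'w::monoid_mult \<Rightarrow> 'm::comm_monoid_add \<Rightarrow> 'm) \<Longrightarrow> nat_le (a::'m) b \<Longrightarrow> nat_le b a \<Longrightarrow> a = b"
  unfolding omega_cont_module_def naturally_ordered_def by blast

lemma sup_ex: "omega_cont_module (act :: 'w::monoid_mult \<Rightarrow> 'm::comm_monoid_add \<Rightarrow> 'm) \<Longrightarrow> omega_chain (c::nat \<Rightarrow> 'm) \<Longrightarrow> \<exists>s. is_sup c s"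
  unfolding omega_cont_module_def by blast

lemma sup_addL: "omega_cont_module (act :: 'w::monoid_mult \<Rightarrow> 'm::comm_monoid_add \<Rightarrow> 'm) \<Longrightarrow> omega_chain (c::nat \<Rightarrow> 'm) \<Longrightarrow> is_sup c s \<Longrightarrow> is_sup (\<lambda>n. a + c n) (a + s)"
  unfolding omega_cont_module_def by blast

lemma sup_addR: "omega_cont_module (act :: 'w::monoid_mult \<Rightarrow> 'm::comm_monoid_add \<Rightarrow> 'm) \<Longrightarrow> omega_chain (c::nat \<Rightarrow> 'm) \<Longrightarrow> is_sup c s \<Longrightarrow> is_sup (\<lambda>n. c n + a) (s + a)"
  unfolding omega_cont_module_def by blast

lemma sup_act: "omega_cont_module (act :: 'w::monoid_mult \<Rightarrow> 'm::comm_monoid_add \<Rightarrow> 'm) \<Longrightarrow> omega_chain (c::nat \<Rightarrow> 'm) \<Longrightarrow> is_sup c s \<Longrightarrow> is_sup (\<lambda>n. act w (c n)) (act w s)"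
  unfolding omega_cont_module_def by blast

lemma act_mono: "omega_cont_module act \<Longrightarrow> nat_le a b \<Longrightarrow> nat_le (act w a) (act w b)"
  unfolding nat_le_def using mod_add by metis

lemma sup_unique: "omega_cont_module (act :: 'w::monoid_mult \<Rightarrow> 'm::comm_monoid_add \<Rightarrow> 'm) \<Longrightarrow> is_sup c (s::'m) \<Longrightarrow> is_sup c t \<Longrightarrow> s = t"
  unfolding is_sup_def using antisym by blast

lemma chain_mono:
  assumes ch: "omega_chain c" and nm: "n \<le> m"
  shows "nat_le (c n) (c m)"
  using nm
proof (induction m rule: dec_induct)
  case base
  then show ?case by (rule nat_le_refl)
next
  case (step m)
  then show ?case using nat_le_trans ch unfolding omega_chain_def by blast
qed

lemma sup_const: "is_sup (\<lambda>_. a) a"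
  unfolding is_sup_def using nat_le_refl by blast

lemma sup_shift: "omega_chain c \<Longrightarrow> is_sup c s \<Longrightarrow> is_sup (\<lambda>n. c (Suc n)) s"
  unfolding is_sup_def omega_chain_def using nat_le_trans by blast

lemma sup_add:
  assumes ocm: "omega_cont_module (act :: 'w::monoid_mult \<Rightarrow> 'm::comm_monoid_add \<Rightarrow> 'm)"
    and cc: "omega_chain (c :: nat \<Rightarrow> 'm)" and cd: "omega_chain d"
    and sc: "is_sup c s" and sd: "is_sup d t"
  shows "is_sup (\<lambda>n. c n + d n) (s + t)"
  unfolding is_sup_def
proof (intro conjI allI impI)
  fix n show "nat_le (c n + d n) (s + t)"
    using sc sd nat_le_add unfolding is_sup_def by blast
next
  fix u assume H: "\<forall>n. nat_le (c n + d n) u"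
  have 1: "nat_le (c m + t) u" for m
  proof -
    have a: "is_sup (\<lambda>n. c m + d n) (c m + t)" using sup_addL[OF ocm cd sd] .
    have "nat_le (c m + d n) u" for n
    proof -
      have "nat_le (c m + d n) (c (max m n) + d (max m n))"
        using nat_le_add[OF chain_mono[OF cc, of m "max m n"] chain_mono[OF cd, of n "max m n"]] by simp
      then show ?thesis using H nat_le_trans by blast
    qed
    then show ?thesis using a unfolding is_sup_def by blast
  qed
  have "is_sup (\<lambda>m. c m + t) (s + t)" using sup_addR[OF ocm cc sc] .
  then show "nat_le (s + t) u" using 1 unfolding is_sup_def by blast
qed

section \<open>Weightings\<close>

definition wchain :: "(nat \<Rightarrow> 's \<Rightarrow> 'm::comm_monoid_add) \<Rightarrow> bool" where
  "wchain F \<longleftrightarrow> (\<forall>k. wt_le (F k) (F (Suc k)))"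

definition wsup :: "(nat \<Rightarrow> 's \<Rightarrow> 'm::comm_monoid_add) \<Rightarrow> ('s \<Rightarrow> 'm) \<Rightarrow> bool" where
  "wsup F S \<longleftrightarrow> (\<forall>\<sigma>. is_sup (\<lambda>k. F k \<sigma>) (S \<sigma>))"

definition wmono :: "(('s \<Rightarrow> 'm::comm_monoid_add) \<Rightarrow> ('t \<Rightarrow> 'm)) \<Rightarrow> bool" where
  "wmono T \<longleftrightarrow> (\<forall>X Y. wt_le X Y \<longrightarrow> wt_le (T X) (T Y))"

definition wcont :: "(('s \<Rightarrow> 'm::comm_monoid_add) \<Rightarrow> ('t \<Rightarrow> 'm)) \<Rightarrow> bool" where
  "wcont T \<longleftrightarrow> (\<forall>F S. wchain F \<longrightarrow> wsup F S \<longrightarrow> wsup (\<lambda>k. T (F k)) (T S))"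

lemma wchain_pt: "wchain F \<Longrightarrow> omega_chain (\<lambda>k. F k \<sigma>)"
  unfolding wchain_def omega_chain_def wt_le_def by blast

lemma wt_le_refl: "wt_le f f"
  unfolding wt_le_def using nat_le_refl by blast

lemma wt_le_trans: "wt_le f g \<Longrightarrow> wt_le g h \<Longrightarrow> wt_le f h"
  unfolding wt_le_def using nat_le_trans by blast

lemma wsup_ex:
  assumes ocm: "omega_cont_module (act :: 'w::monoid_mult \<Rightarrow> 'm::comm_monoid_add \<Rightarrow> 'm)" and ch: "wchain (F :: nat \<Rightarrow> 's \<Rightarrow> 'm)"
  shows "\<exists>S. wsup F S"
proof -
  have "\<forall>\<sigma>. \<exists>s. is_sup (\<lambda>k. F k \<sigma>) s"
    using sup_ex[OF ocm wchain_pt[OF ch]] by blast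
  then show ?thesis unfolding wsup_def by metis
qed

lemma wsup_unique:
  assumes ocm: "omega_cont_module (act :: 'w::monoid_mult \<Rightarrow> 'm::comm_monoid_add \<Rightarrow> 'm)"
  shows "wsup F (S :: 's \<Rightarrow> 'm) \<Longrightarrow> wsup F S' \<Longrightarrow> S = S'"
  unfolding wsup_def using sup_unique[OF ocm] by (metis ext)

lemma wt_antisym:
  assumes ocm: "omega_cont_module (act :: 'w::monoid_mult \<Rightarrow> 'm::comm_monoid_add \<Rightarrow> 'm)"
  shows "wt_le (X :: 's \<Rightarrow> 'm) Y \<Longrightarrow> wt_le Y X \<Longrightarrow> X = Y"
  unfolding wt_le_def using antisym[OF ocm] by (metis ext)

lemma wsup_le: "wsup F S \<Longrightarrow> wt_le (F k) S"
  unfolding wsup_def is_sup_def wt_le_def by blast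

lemma wsup_least: "wsup F S \<Longrightarrow> (\<And>k. nat_le (F k \<sigma>) u) \<Longrightarrow> nat_le (S \<sigma>) u"
  unfolding wsup_def is_sup_def by blast

lemma wsup_const: "wsup (\<lambda>_. f) f"
  unfolding wsup_def using sup_const by blast

lemma wchain_const: "wchain (\<lambda>_. f)"
  unfolding wchain_def using wt_le_refl by blast

lemma wsup_add:
  assumes ocm: "omega_cont_module (act :: 'w::monoid_mult \<Rightarrow> 'm::comm_monoid_add \<Rightarrow> 'm)"
    and "wchain (F :: nat \<Rightarrow> 's \<Rightarrow> 'm)" "wchain G" "wsup F S" "wsup G U"
  shows "wsup (\<lambda>k \<sigma>. F k \<sigma> + G k \<sigma>) (\<lambda>\<sigma>. S \<sigma> + U \<sigma>)"
  unfolding wsup_def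
proof
  fix \<sigma>
  have a: "is_sup (\<lambda>k. F k \<sigma>) (S \<sigma>)" using assms(4) unfolding wsup_def by blast
  have b: "is_sup (\<lambda>k. G k \<sigma>) (U \<sigma>)" using assms(5) unfolding wsup_def by blast
  show "is_sup (\<lambda>k. F k \<sigma> + G k \<sigma>) (S \<sigma> + U \<sigma>)"
    by (rule sup_add[OF ocm wchain_pt[OF assms(2)] wchain_pt[OF assms(3)] a b])
qed

lemma wchain_add: "wchain F \<Longrightarrow> wchain G \<Longrightarrow> wchain (\<lambda>k \<sigma>. F k \<sigma> + G k \<sigma>)"
  unfolding wchain_def wt_le_def using nat_le_add by blast

lemma iv_le: "wt_le f g \<Longrightarrow> wt_le (iv \<phi> f) (iv \<phi> g)"
  unfolding wt_le_def iv_def using nat_le_refl by auto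

lemma iv_chain: "wchain F \<Longrightarrow> wchain (\<lambda>k. iv \<phi> (F k))"
  unfolding wchain_def using iv_le by blast

lemma iv_sup: "wsup F G \<Longrightarrow> wsup (\<lambda>k. iv \<phi> (F k)) (iv \<phi> G)"
  unfolding wsup_def iv_def using sup_const by auto

section \<open>Kleene\<close>

lemma kleene_chain:
  fixes \<Phi> :: "('s \<Rightarrow> 'm::comm_monoid_add) \<Rightarrow> ('s \<Rightarrow> 'm)"
  assumes "wmono \<Phi>"
  shows "wchain (\<lambda>n. (\<Phi> ^^ n) (\<lambda>_. (0::'m::comm_monoid_add)))"
  unfolding wchain_def
proof
  fix k show "wt_le ((\<Phi> ^^ k) (\<lambda>_. 0)) ((\<Phi> ^^ Suc k) (\<lambda>_. 0))"
  proof (induction k)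
    case 0
    then show ?case by (simp add: wt_le_def nat_le_0)
  next
    case (Suc k)
    then show ?case using assms unfolding wmono_def by simp
  qed
qed

lemma kleene:
  fixes \<Phi> :: "('s \<Rightarrow> 'm::comm_monoid_add) \<Rightarrow> ('s \<Rightarrow> 'm)"
  assumes ocm: "omega_cont_module (act :: 'w::monoid_mult \<Rightarrow> 'm \<Rightarrow> 'm)"
    and mo: "wmono \<Phi>" and co: "wcont \<Phi>"
  shows "wsup (\<lambda>n. (\<Phi> ^^ n) (\<lambda>_. (0::'m::comm_monoid_add))) (wt_lfp \<Phi>)"
proof -
  let ?K = "\<lambda>n. (\<Phi> ^^ n) (\<lambda>_. (0::'m))"
  have ch: "wchain ?K" by (rule kleene_chain[OF mo])
  obtain S where S: "wsup ?K S" using wsup_ex[OF ocm ch] by blast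
  have a: "wsup (\<lambda>k. \<Phi> (?K k)) (\<Phi> S)" using co[unfolded wcont_def, rule_format, OF ch S] .
  have eq: "?K (Suc k) = \<Phi> (?K k)" for k by simp
  have b: "wsup (\<lambda>k. \<Phi> (?K k)) S"
    unfolding wsup_def
  proof
    fix \<sigma>
    have "is_sup (\<lambda>k. ?K k \<sigma>) (S \<sigma>)" using S unfolding wsup_def by blast
    then have "is_sup (\<lambda>k. ?K (Suc k) \<sigma>) (S \<sigma>)" by (rule sup_shift[OF wchain_pt[OF ch]])
    then show "is_sup (\<lambda>k. \<Phi> (?K k) \<sigma>) (S \<sigma>)" by (simp only: eq)
  qed
  have fx: "\<Phi> S = S" using wsup_unique[OF ocm a b] .
  have least: "wt_le S Y" if Y: "\<Phi> Y = Y" for Y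
  proof -
    have "wt_le (?K n) Y" for n
    proof (induction n)
      case 0
      then show ?case by (simp add: wt_le_def nat_le_0)
    next
      case (Suc n)
      then have "wt_le (\<Phi> (?K n)) (\<Phi> Y)" using mo unfolding wmono_def by blast
      then show ?case using Y by simp
    qed
    then show ?thesis using S unfolding wt_le_def wsup_def is_sup_def by blast
  qed
  have "wt_lfp \<Phi> = S"
    unfolding wt_lfp_def
  proof (rule the_equality)
    show "\<Phi> S = S \<and> (\<forall>Y. \<Phi> Y = Y \<longrightarrow> wt_le S Y)" using fx least by blast
  next
    fix X assume "\<Phi> X = X \<and> (\<forall>Y. \<Phi> Y = Y \<longrightarrow> wt_le X Y)"
    then show "X = S" using fx least wt_antisym[OF ocm] by blast
  qed
  then show ?thesis using S by simp
qed

section \<open>Loop functional\<close>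

definition Phi :: "(('s \<Rightarrow> 'm::comm_monoid_add) \<Rightarrow> ('s \<Rightarrow> 'm)) \<Rightarrow> ('s \<Rightarrow> bool) \<Rightarrow> ('s \<Rightarrow> 'm) \<Rightarrow> ('s \<Rightarrow> 'm) \<Rightarrow> ('s \<Rightarrow> 'm)" where
  "Phi T \<phi> f X = (\<lambda>\<sigma>. iv (\<lambda>\<tau>. \<not> \<phi> \<tau>) f \<sigma> + iv \<phi> (T X) \<sigma>)"

definition K where "K T \<phi> f n = (Phi T \<phi> f ^^ n) (\<lambda>_. 0)"

lemma K_0: "K T \<phi> f 0 = (\<lambda>_. 0)" by (simp add: K_def)
lemma K_Suc: "K T \<phi> f (Suc n) = Phi T \<phi> f (K T \<phi> f n)" by (simp add: K_def)

lemma Phi_mono2: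
  assumes mo: "wmono T" and fg: "wt_le f g" and XY: "wt_le X Y"
  shows "wt_le (Phi T \<phi> f X) (Phi T \<phi> g Y)"
  unfolding wt_le_def
proof
  fix \<sigma>
  have "nat_le (T X \<sigma>) (T Y \<sigma>)" using mo XY unfolding wmono_def wt_le_def by blast
  moreover have "nat_le (f \<sigma>) (g \<sigma>)" using fg unfolding wt_le_def by blast
  ultimately show "nat_le (Phi T \<phi> f X \<sigma>) (Phi T \<phi> g Y \<sigma>)"
    unfolding Phi_def iv_def by (cases "\<phi> \<sigma>") simp_all
qed

lemma Phi_cont2:
  fixes T :: "('s \<Rightarrow> 'm::comm_monoid_add) \<Rightarrow> ('s \<Rightarrow> 'm)"
  assumes ocm: "omega_cont_module (act :: 'w::monoid_mult \<Rightarrow> 'm \<Rightarrow> 'm)" and mo: "wmono T" and co: "wcont T"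
    and "wchain F" "wsup F G" "wchain Xs" "wsup Xs X"
  shows "wsup (\<lambda>k. Phi T \<phi> (F k) (Xs k)) (Phi T \<phi> G X)"
proof -
  have c1: "wchain (\<lambda>k. T (Xs k))" unfolding wchain_def
  proof
    fix k
    have "wt_le (Xs k) (Xs (Suc k))" using assms(6) by (simp add: wchain_def)
    then show "wt_le (T (Xs k)) (T (Xs (Suc k)))" using mo by (simp add: wmono_def)
  qed
  have s1: "wsup (\<lambda>k. T (Xs k)) (T X)" using co[unfolded wcont_def, rule_format, OF assms(6,7)] .
  show ?thesis unfolding Phi_def
    by (rule wsup_add[OF ocm iv_chain[OF assms(4)] iv_chain[OF c1] iv_sup[OF assms(5)] iv_sup[OF s1]])
qed

lemma Phi_wmono: assumes "wmono T" shows "wmono (Phi T \<phi> f)"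
  unfolding wmono_def using Phi_mono2[OF assms wt_le_refl] by blast

lemma Phi_wcont:
  fixes T :: "('s \<Rightarrow> 'm::comm_monoid_add) \<Rightarrow> ('s \<Rightarrow> 'm)"
  assumes ocm: "omega_cont_module (act :: 'w::monoid_mult \<Rightarrow> 'm \<Rightarrow> 'm)" and mo: "wmono T" and co: "wcont T"
  shows "wcont (Phi T \<phi> f)"
  unfolding wcont_def using Phi_cont2[OF ocm mo co wchain_const wsup_const] by blast

lemma K_chain: "wmono T \<Longrightarrow> wchain (K T \<phi> f)"
  unfolding K_def using kleene_chain Phi_wmono by blast

lemma K_sup:
  fixes T :: "('s \<Rightarrow> 'm::comm_monoid_add) \<Rightarrow> ('s \<Rightarrow> 'm)"
  assumes ocm: "omega_cont_module (act :: 'w::monoid_mult \<Rightarrow> 'm \<Rightarrow> 'm)" and mo: "wmono T" and co: "wcont T"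
  shows "wsup (K T \<phi> f) (wt_lfp (Phi T \<phi> f))"
  unfolding K_def[abs_def]
  using kleene[OF ocm Phi_wmono[OF mo] Phi_wcont[OF ocm mo co]] by simp

definition good :: "('w::monoid_mult \<Rightarrow> 'm::comm_monoid_add \<Rightarrow> 'm) \<Rightarrow> (('s \<Rightarrow> 'm) \<Rightarrow> ('s \<Rightarrow> 'm)) \<Rightarrow> bool" where
  "good act T \<longleftrightarrow> wmono T \<and> T (\<lambda>_. 0) = (\<lambda>_. 0)
     \<and> (\<forall>f g. T (\<lambda>\<sigma>. f \<sigma> + g \<sigma>) = (\<lambda>\<sigma>. T f \<sigma> + T g \<sigma>))
     \<and> wcont T
     \<and> ((\<forall>v w :: 'w. v * w = w * v) \<longrightarrow> (\<forall>a f. T (\<lambda>\<sigma>. act a (f \<sigma>)) = (\<lambda>\<sigma>. act a (T f \<sigma>))))"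


lemma good_Assign:
  assumes ocm: "omega_cont_module (act :: 'w::monoid_mult \<Rightarrow> 'm::comm_monoid_add \<Rightarrow> 'm)"
  shows "good act (\<lambda>(f::('v \<Rightarrow> 'a) \<Rightarrow> 'm) \<sigma>. f (\<sigma>(x := E \<sigma>)))"
  unfolding good_def
proof (intro conjI)
  show "wmono (\<lambda>(f::('v \<Rightarrow> 'a) \<Rightarrow> 'm) \<sigma>. f (\<sigma>(x := E \<sigma>)))"
    unfolding wmono_def wt_le_def by blast
  show "wcont (\<lambda>(f::('v \<Rightarrow> 'a) \<Rightarrow> 'm) \<sigma>. f (\<sigma>(x := E \<sigma>)))"
    unfolding wcont_def wsup_def by blast
qed simp_all

lemma good_Seq:
  assumes ocm: "omega_cont_module (act :: 'w::monoid_mult \<Rightarrow> 'm::comm_monoid_add \<Rightarrow> 'm)"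
    and g1: "good act (T1 :: ('s \<Rightarrow> 'm) \<Rightarrow> ('s \<Rightarrow> 'm))" and g2: "good act T2"
  shows "good act (\<lambda>f. T1 (T2 f))"
proof -
  have m1: "wmono T1" and s1: "T1 (\<lambda>_. 0) = (\<lambda>_. 0)"
    and a1: "\<And>f g. T1 (\<lambda>\<sigma>. f \<sigma> + g \<sigma>) = (\<lambda>\<sigma>. T1 f \<sigma> + T1 g \<sigma>)"
    and c1: "wcont T1"
    and h1: "(\<forall>v w :: 'w. v * w = w * v) \<Longrightarrow> (\<forall>a f. T1 (\<lambda>\<sigma>. act a (f \<sigma>)) = (\<lambda>\<sigma>. act a (T1 f \<sigma>)))"
    using g1 unfolding good_def by blast+
  have m2: "wmono T2" and s2: "T2 (\<lambda>_. 0) = (\<lambda>_. 0)"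
    and a2: "\<And>f g. T2 (\<lambda>\<sigma>. f \<sigma> + g \<sigma>) = (\<lambda>\<sigma>. T2 f \<sigma> + T2 g \<sigma>)"
    and c2: "wcont T2"
    and h2: "(\<forall>v w :: 'w. v * w = w * v) \<Longrightarrow> (\<forall>a f. T2 (\<lambda>\<sigma>. act a (f \<sigma>)) = (\<lambda>\<sigma>. act a (T2 f \<sigma>)))"
    using g2 unfolding good_def by blast+
  have M: "wmono (\<lambda>f. T1 (T2 f))" using m1 m2 unfolding wmono_def by blast
  have C: "wcont (\<lambda>f. T1 (T2 f))" unfolding wcont_def
  proof (intro allI impI)
    fix F :: "nat \<Rightarrow> 's \<Rightarrow> 'm" and S :: "'s \<Rightarrow> 'm" assume ch: "wchain F" and sp: "wsup F S"
    have ch2: "wchain (\<lambda>k. T2 (F k))" using ch m2 unfolding wchain_def wmono_def by blast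
    have sp2: "wsup (\<lambda>k. T2 (F k)) (T2 S)" using c2[unfolded wcont_def, rule_format, OF ch sp] .
    show "wsup (\<lambda>k. T1 (T2 (F k))) (T1 (T2 S))" using c1[unfolded wcont_def, rule_format, OF ch2 sp2] .
  qed
  show ?thesis unfolding good_def using M C s1 s2 a1 a2 h1 h2 by simp
qed

lemma good_sum:
  assumes ocm: "omega_cont_module (act :: 'w::monoid_mult \<Rightarrow> 'm::comm_monoid_add \<Rightarrow> 'm)"
    and g1: "good act (T1 :: ('s \<Rightarrow> 'm) \<Rightarrow> ('s \<Rightarrow> 'm))" and g2: "good act T2"
  shows "good act (\<lambda>f \<sigma>. T1 f \<sigma> + T2 f \<sigma>)"
proof -
  have m1: "wmono T1" and s1: "T1 (\<lambda>_. 0) = (\<lambda>_. 0)"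
    and a1: "\<And>f g. T1 (\<lambda>\<sigma>. f \<sigma> + g \<sigma>) = (\<lambda>\<sigma>. T1 f \<sigma> + T1 g \<sigma>)"
    and c1: "wcont T1"
    and h1: "(\<forall>v w :: 'w. v * w = w * v) \<Longrightarrow> (\<forall>a f. T1 (\<lambda>\<sigma>. act a (f \<sigma>)) = (\<lambda>\<sigma>. act a (T1 f \<sigma>)))"
    using g1 unfolding good_def by blast+
  have m2: "wmono T2" and s2: "T2 (\<lambda>_. 0) = (\<lambda>_. 0)"
    and a2: "\<And>f g. T2 (\<lambda>\<sigma>. f \<sigma> + g \<sigma>) = (\<lambda>\<sigma>. T2 f \<sigma> + T2 g \<sigma>)"
    and c2: "wcont T2"
    and h2: "(\<forall>v w :: 'w. v * w = w * v) \<Longrightarrow> (\<forall>a f. T2 (\<lambda>\<sigma>. act a (f \<sigma>)) = (\<lambda>\<sigma>. act a (T2 f \<sigma>)))"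
    using g2 unfolding good_def by blast+
  have M: "wmono (\<lambda>f \<sigma>. T1 f \<sigma> + T2 f \<sigma>)" unfolding wmono_def
  proof (intro allI impI)
    fix X Y :: "'s \<Rightarrow> 'm" assume "wt_le X Y"
    then have "wt_le (T1 X) (T1 Y)" "wt_le (T2 X) (T2 Y)" using m1 m2 unfolding wmono_def by blast+
    then show "wt_le (\<lambda>\<sigma>. T1 X \<sigma> + T2 X \<sigma>) (\<lambda>\<sigma>. T1 Y \<sigma> + T2 Y \<sigma>)"
      unfolding wt_le_def using nat_le_add by blast
  qed
  have C: "wcont (\<lambda>f \<sigma>. T1 f \<sigma> + T2 f \<sigma>)" unfolding wcont_def
  proof (intro allI impI)
    fix F :: "nat \<Rightarrow> 's \<Rightarrow> 'm" and S :: "'s \<Rightarrow> 'm" assume ch: "wchain F" and sp: "wsup F S"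
    have ch1: "wchain (\<lambda>k. T1 (F k))" using ch m1 unfolding wchain_def wmono_def by blast
    have ch2: "wchain (\<lambda>k. T2 (F k))" using ch m2 unfolding wchain_def wmono_def by blast
    have sp1: "wsup (\<lambda>k. T1 (F k)) (T1 S)" using c1[unfolded wcont_def, rule_format, OF ch sp] .
    have sp2: "wsup (\<lambda>k. T2 (F k)) (T2 S)" using c2[unfolded wcont_def, rule_format, OF ch sp] .
    show "wsup (\<lambda>k \<sigma>. T1 (F k) \<sigma> + T2 (F k) \<sigma>) (\<lambda>\<sigma>. T1 S \<sigma> + T2 S \<sigma>)"
      by (rule wsup_add[OF ocm ch1 ch2 sp1 sp2])
  qed
  have A: "\<forall>f g. (\<lambda>\<sigma>. T1 (\<lambda>\<sigma>. f \<sigma> + g \<sigma>) \<sigma> + T2 (\<lambda>\<sigma>. f \<sigma> + g \<sigma>) \<sigma>)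
      = (\<lambda>\<sigma>. (T1 f \<sigma> + T2 f \<sigma>) + (T1 g \<sigma> + T2 g \<sigma>))"
    by (simp add: a1 a2 ac_simps)
  have H: "(\<forall>v w :: 'w. v * w = w * v) \<longrightarrow> (\<forall>a f. (\<lambda>\<sigma>. T1 (\<lambda>\<sigma>. act a (f \<sigma>)) \<sigma> + T2 (\<lambda>\<sigma>. act a (f \<sigma>)) \<sigma>)
      = (\<lambda>\<sigma>. act a (T1 f \<sigma> + T2 f \<sigma>)))"
    using h1 h2 by (simp add: mod_add[OF ocm])
  show ?thesis unfolding good_def using M C A H s1 s2 by simp
qed

lemma good_iv:
  assumes ocm: "omega_cont_module (act :: 'w::monoid_mult \<Rightarrow> 'm::comm_monoid_add \<Rightarrow> 'm)"
    and g1: "good act (T1 :: ('s \<Rightarrow> 'm) \<Rightarrow> ('s \<Rightarrow> 'm))"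
  shows "good act (\<lambda>f. iv \<phi> (T1 f))"
proof -
  have m1: "wmono T1" and s1: "T1 (\<lambda>_. 0) = (\<lambda>_. 0)"
    and a1: "\<And>f g. T1 (\<lambda>\<sigma>. f \<sigma> + g \<sigma>) = (\<lambda>\<sigma>. T1 f \<sigma> + T1 g \<sigma>)"
    and c1: "wcont T1"
    and h1: "(\<forall>v w :: 'w. v * w = w * v) \<Longrightarrow> (\<forall>a f. T1 (\<lambda>\<sigma>. act a (f \<sigma>)) = (\<lambda>\<sigma>. act a (T1 f \<sigma>)))"
    using g1 unfolding good_def by blast+
  have M: "wmono (\<lambda>f. iv \<phi> (T1 f))" using m1 iv_le unfolding wmono_def by blast
  have C: "wcont (\<lambda>f. iv \<phi> (T1 f))" unfolding wcont_def
  proof (intro allI impI)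
    fix F :: "nat \<Rightarrow> 's \<Rightarrow> 'm" and S :: "'s \<Rightarrow> 'm" assume ch: "wchain F" and sp: "wsup F S"
    have sp1: "wsup (\<lambda>k. T1 (F k)) (T1 S)" using c1[unfolded wcont_def, rule_format, OF ch sp] .
    show "wsup (\<lambda>k. iv \<phi> (T1 (F k))) (iv \<phi> (T1 S))" by (rule iv_sup[OF sp1])
  qed
  have S: "iv \<phi> (T1 (\<lambda>_. 0)) = (\<lambda>_. 0)" using s1 by (simp add: iv_def)
  have A: "\<forall>f g. iv \<phi> (T1 (\<lambda>\<sigma>. f \<sigma> + g \<sigma>)) = (\<lambda>\<sigma>. iv \<phi> (T1 f) \<sigma> + iv \<phi> (T1 g) \<sigma>)"
    by (simp add: a1 iv_def fun_eq_iff)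
  have H: "(\<forall>v w :: 'w. v * w = w * v) \<longrightarrow> (\<forall>a f. iv \<phi> (T1 (\<lambda>\<sigma>. act a (f \<sigma>)))
      = (\<lambda>\<sigma>. act a (iv \<phi> (T1 f) \<sigma>)))"
    using h1 by (simp add: iv_def fun_eq_iff mod_0[OF ocm])
  show ?thesis unfolding good_def using M C A H S by blast
qed

lemma good_Weight:
  assumes ocm: "omega_cont_module (act :: 'w::monoid_mult \<Rightarrow> 'm::comm_monoid_add \<Rightarrow> 'm)"
  shows "good act (\<lambda>(f::'s \<Rightarrow> 'm) \<sigma>. act b (f \<sigma>))"
proof -
  have M: "wmono (\<lambda>(f::'s \<Rightarrow> 'm) \<sigma>. act b (f \<sigma>))"
    unfolding wmono_def wt_le_def
  proof (intro allI impI)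
    fix X Y :: "'s \<Rightarrow> 'm" and \<sigma> assume "\<forall>\<sigma>. nat_le (X \<sigma>) (Y \<sigma>)"
    then have "nat_le (X \<sigma>) (Y \<sigma>)" by blast
    then show "nat_le (act b (X \<sigma>)) (act b (Y \<sigma>))" by (rule act_mono[OF ocm])
  qed
  have C: "wcont (\<lambda>(f::'s \<Rightarrow> 'm) \<sigma>. act b (f \<sigma>))"
    unfolding wcont_def
  proof (intro allI impI)
    fix F :: "nat \<Rightarrow> 's \<Rightarrow> 'm" and S :: "'s \<Rightarrow> 'm" assume ch: "wchain F" and sp: "wsup F S"
    show "wsup (\<lambda>k \<sigma>. act b (F k \<sigma>)) (\<lambda>\<sigma>. act b (S \<sigma>))"
      unfolding wsup_def
    proof
      fix \<sigma>
      have "is_sup (\<lambda>k. F k \<sigma>) (S \<sigma>)" using sp unfolding wsup_def by blast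
      then show "is_sup (\<lambda>k. act b (F k \<sigma>)) (act b (S \<sigma>))" by (rule sup_act[OF ocm wchain_pt[OF ch]])
    qed
  qed
  have H: "(\<forall>v w :: 'w. v * w = w * v) \<longrightarrow> (\<forall>a (f::'s \<Rightarrow> 'm). (\<lambda>\<sigma>. act b (act a (f \<sigma>)))
      = (\<lambda>\<sigma>. act a (act b (f \<sigma>))))"
  proof (intro impI allI ext)
    fix a \<sigma> and f :: "'s \<Rightarrow> 'm" assume cm: "\<forall>v w :: 'w. v * w = w * v"
    have "act b (act a (f \<sigma>)) = act (b * a) (f \<sigma>)" by (rule mod_mult[OF ocm, symmetric])
    also have "\<dots> = act (a * b) (f \<sigma>)" using cm by simp
    also have "\<dots> = act a (act b (f \<sigma>))" by (rule mod_mult[OF ocm])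
    finally show "act b (act a (f \<sigma>)) = act a (act b (f \<sigma>))" .
  qed
  show ?thesis unfolding good_def using M C H by (simp add: mod_0[OF ocm] mod_add[OF ocm])
qed

lemma good_While:
  fixes T :: "('s \<Rightarrow> 'm::comm_monoid_add) \<Rightarrow> ('s \<Rightarrow> 'm)"
  assumes ocm: "omega_cont_module (act :: 'w::monoid_mult \<Rightarrow> 'm \<Rightarrow> 'm)" and g: "good act T"
  shows "good act (\<lambda>f. wt_lfp (Phi T \<phi> f))"
proof -
  have mo: "wmono T" and st: "T (\<lambda>_. 0) = (\<lambda>_. 0)"
    and ad: "\<And>f g. T (\<lambda>\<sigma>. f \<sigma> + g \<sigma>) = (\<lambda>\<sigma>. T f \<sigma> + T g \<sigma>)"
    and co: "wcont T"
    and ho: "(\<forall>v w :: 'w. v * w = w * v) \<Longrightarrow> (\<forall>a f. T (\<lambda>\<sigma>. act a (f \<sigma>)) = (\<lambda>\<sigma>. act a (T f \<sigma>)))"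
    using g unfolding good_def by blast+
  let ?L = "\<lambda>f. wt_lfp (Phi T \<phi> f)"
  have KS: "wsup (K T \<phi> f) (?L f)" for f using K_sup[OF ocm mo co] .
  have KC: "wchain (K T \<phi> f)" for f using K_chain[OF mo] .
  have Kmono: "wt_le (K T \<phi> f n) (K T \<phi> g n)" if fg: "wt_le f g" for f g n
  proof (induction n)
    case 0 show ?case by (simp add: K_0 wt_le_refl)
  next
    case (Suc n) show ?case unfolding K_Suc by (rule Phi_mono2[OF mo fg Suc])
  qed
  have M: "wmono ?L"
    unfolding wmono_def
  proof (intro allI impI)
    fix f g :: "'s \<Rightarrow> 'm" assume fg: "wt_le f g"
    show "wt_le (?L f) (?L g)" unfolding wt_le_def
    proof
      fix \<sigma>
      show "nat_le (?L f \<sigma>) (?L g \<sigma>)"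
      proof (rule wsup_least[OF KS[of f]])
        fix k
        have "nat_le (K T \<phi> f k \<sigma>) (K T \<phi> g k \<sigma>)" using Kmono[OF fg] unfolding wt_le_def by blast
        moreover have "nat_le (K T \<phi> g k \<sigma>) (?L g \<sigma>)" using wsup_le[OF KS[of g]] unfolding wt_le_def by blast
        ultimately show "nat_le (K T \<phi> f k \<sigma>) (?L g \<sigma>)" by (rule nat_le_trans)
      qed
    qed
  qed
  have S: "?L (\<lambda>_. 0) = (\<lambda>_. 0)"
  proof -
    have K0: "K T \<phi> (\<lambda>_. 0) n = (\<lambda>_. 0)" for n
    proof (induction n)
      case 0 show ?case by (simp add: K_0)
    next
      case (Suc n) show ?case unfolding K_Suc Suc Phi_def st by (simp add: iv_def)
    qed
    have "K T \<phi> (\<lambda>_. 0) = (\<lambda>_. (\<lambda>_. 0))" by (rule ext) (rule K0)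
    then have "wsup (K T \<phi> (\<lambda>_. 0)) (\<lambda>_. 0)" using wsup_const by simp
    then show ?thesis by (rule wsup_unique[OF ocm KS])
  qed
  have A: "?L (\<lambda>\<sigma>. f \<sigma> + g \<sigma>) = (\<lambda>\<sigma>. ?L f \<sigma> + ?L g \<sigma>)" for f g
  proof -
    have KA: "K T \<phi> (\<lambda>\<sigma>. f \<sigma> + g \<sigma>) n = (\<lambda>\<sigma>. K T \<phi> f n \<sigma> + K T \<phi> g n \<sigma>)" for n
    proof (induction n)
      case 0 show ?case by (simp add: K_0)
    next
      case (Suc n)
      show ?case unfolding K_Suc Suc Phi_def ad by (simp add: iv_def ac_simps fun_eq_iff)
    qed
    have "K T \<phi> (\<lambda>\<sigma>. f \<sigma> + g \<sigma>) = (\<lambda>n \<sigma>. K T \<phi> f n \<sigma> + K T \<phi> g n \<sigma>)" by (rule ext) (rule KA)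
    moreover have "wsup (\<lambda>n \<sigma>. K T \<phi> f n \<sigma> + K T \<phi> g n \<sigma>) (\<lambda>\<sigma>. ?L f \<sigma> + ?L g \<sigma>)"
      by (rule wsup_add[OF ocm KC[of f] KC[of g] KS[of f] KS[of g]])
    ultimately have "wsup (K T \<phi> (\<lambda>\<sigma>. f \<sigma> + g \<sigma>)) (\<lambda>\<sigma>. ?L f \<sigma> + ?L g \<sigma>)" by simp
    then show ?thesis by (rule wsup_unique[OF ocm KS])
  qed
  have C: "wcont ?L"
    unfolding wcont_def
  proof (intro allI impI)
    fix F :: "nat \<Rightarrow> 's \<Rightarrow> 'm" and G :: "'s \<Rightarrow> 'm" assume ch: "wchain F" and sp: "wsup F G"
    have Fle: "wt_le (F k) G" for k using wsup_le[OF sp] .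
    have chn: "wchain (\<lambda>k. K T \<phi> (F k) n)" for n
      unfolding wchain_def
    proof
      fix k
      have "wt_le (F k) (F (Suc k))" using ch unfolding wchain_def by blast
      then show "wt_le (K T \<phi> (F k) n) (K T \<phi> (F (Suc k)) n)" by (rule Kmono)
    qed
    have IH: "wsup (\<lambda>k. K T \<phi> (F k) n) (K T \<phi> G n)" for n
    proof (induction n)
      case 0 show ?case by (simp add: K_0 wsup_const)
    next
      case (Suc n)
      show ?case unfolding K_Suc by (rule Phi_cont2[OF ocm mo co ch sp chn Suc])
    qed
    show "wsup (\<lambda>k. ?L (F k)) (?L G)"
      unfolding wsup_def is_sup_def
    proof (intro allI conjI impI)
      fix \<sigma> k
      show "nat_le (?L (F k) \<sigma>) (?L G \<sigma>)" using M Fle unfolding wmono_def wt_le_def by blast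
    next
      fix \<sigma> u assume H: "\<forall>k. nat_le (?L (F k) \<sigma>) u"
      show "nat_le (?L G \<sigma>) u"
      proof (rule wsup_least[OF KS[of G]])
        fix n
        show "nat_le (K T \<phi> G n \<sigma>) u"
        proof (rule wsup_least[OF IH[of n]])
          fix k
          have "nat_le (K T \<phi> (F k) n \<sigma>) (?L (F k) \<sigma>)"
            using wsup_le[OF KS[of "F k"]] unfolding wt_le_def by blast
          then show "nat_le (K T \<phi> (F k) n \<sigma>) u" using H nat_le_trans by blast
        qed
      qed
    qed
  qed
  have H: "(\<forall>v w :: 'w. v * w = w * v) \<longrightarrow> (\<forall>a f. ?L (\<lambda>\<sigma>. act a (f \<sigma>)) = (\<lambda>\<sigma>. act a (?L f \<sigma>)))"
  proof (intro impI allI)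
    fix a and f :: "'s \<Rightarrow> 'm" assume cm: "\<forall>v w :: 'w. v * w = w * v"
    have hh: "T (\<lambda>\<sigma>. act a (h \<sigma>)) = (\<lambda>\<sigma>. act a (T h \<sigma>))" for h using ho[OF cm] by blast
    have KH: "K T \<phi> (\<lambda>\<sigma>. act a (f \<sigma>)) n = (\<lambda>\<sigma>. act a (K T \<phi> f n \<sigma>))" for n
    proof (induction n)
      case 0 show ?case by (simp add: K_0 mod_0[OF ocm])
    next
      case (Suc n)
      show ?case unfolding K_Suc Suc Phi_def hh
        by (simp add: iv_def mod_add[OF ocm] mod_0[OF ocm] fun_eq_iff)
    qed
    have E: "K T \<phi> (\<lambda>\<sigma>. act a (f \<sigma>)) = (\<lambda>n \<sigma>. act a (K T \<phi> f n \<sigma>))" by (rule ext) (rule KH)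
    have "is_sup (\<lambda>k. K T \<phi> f k \<sigma>) (?L f \<sigma>)" for \<sigma> using KS[of f] unfolding wsup_def by blast
    then have "is_sup (\<lambda>k. act a (K T \<phi> f k \<sigma>)) (act a (?L f \<sigma>))" for \<sigma>
      using sup_act[OF ocm wchain_pt[OF KC[of f]]] by blast
    then have "wsup (\<lambda>n \<sigma>. act a (K T \<phi> f n \<sigma>)) (\<lambda>\<sigma>. act a (?L f \<sigma>))" unfolding wsup_def by blast
    then have "wsup (K T \<phi> (\<lambda>\<sigma>. act a (f \<sigma>))) (\<lambda>\<sigma>. act a (?L f \<sigma>))" using E by simp
    then show "?L (\<lambda>\<sigma>. act a (f \<sigma>)) = (\<lambda>\<sigma>. act a (?L f \<sigma>))" by (rule wsup_unique[OF ocm KS])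
  qed
  show ?thesis unfolding good_def using M S A C H by blast
qed

lemma good_wp:
  assumes ocm: "omega_cont_module (act :: 'w::monoid_mult \<Rightarrow> 'm::comm_monoid_add \<Rightarrow> 'm)"
  shows "good act (wp act (C :: ('v, 'a, 'w) wgcl))"
proof (induction C)
  case (Assign x E)
  have "wp act (Assign x E) = (\<lambda>f \<sigma>. f (\<sigma>(x := E \<sigma>)))" by (rule ext) simp
  then show ?case using good_Assign[OF ocm] by simp
next
  case (Seq C1 C2)
  have "wp act (Seq C1 C2) = (\<lambda>f. wp act C1 (wp act C2 f))" by (rule ext) simp
  then show ?case using good_Seq[OF ocm Seq.IH] by simp
next
  case (Ite \<phi> C1 C2)
  have "wp act (Ite \<phi> C1 C2) = (\<lambda>f \<sigma>. iv \<phi> (wp act C1 f) \<sigma> + iv (\<lambda>\<tau>. \<not> \<phi> \<tau>) (wp act C2 f) \<sigma>)"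
    by (rule ext) simp
  then show ?case using good_sum[OF ocm good_iv[OF ocm Ite.IH(1)] good_iv[OF ocm Ite.IH(2)]] by simp
next
  case (Branch C1 C2)
  have "wp act (Branch C1 C2) = (\<lambda>f \<sigma>. wp act C1 f \<sigma> + wp act C2 f \<sigma>)" by (rule ext) simp
  then show ?case using good_sum[OF ocm Branch.IH] by simp
next
  case (Weight b)
  have "wp act (Weight b) = (\<lambda>f \<sigma>. act b (f \<sigma>))" by (rule ext) simp
  then show ?case using good_Weight[OF ocm] by simp
next
  case (While \<phi> C)
  have "wp act (While \<phi> C) = (\<lambda>f. wt_lfp (Phi (wp act C) \<phi> f))" by (rule ext) (simp add: Phi_def[abs_def])
  then show ?case using good_While[OF ocm While.IH] by simp
qed

theorem mainTheorem2:
  fixes act :: "'w::monoid_mult \<Rightarrow> 'm::comm_monoid_add \<Rightarrow> 'm"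
    and C :: "('v, 'a, 'w) wgcl"
  assumes "omega_cont_module act"
  shows "(\<forall>f g. wt_le f g \<longrightarrow> wt_le (wp act C f) (wp act C g))
       \<and> wp act C (\<lambda>_. 0) = (\<lambda>_. 0)
       \<and> (\<forall>f g. wp act C (\<lambda>\<sigma>. f \<sigma> + g \<sigma>) = (\<lambda>\<sigma>. wp act C f \<sigma> + wp act C g \<sigma>))
       \<and> ((\<forall>v w :: 'w. v * w = w * v) \<longrightarrow>
            (\<forall>a f. wp act C (\<lambda>\<sigma>. act a (f \<sigma>)) = (\<lambda>\<sigma>. act a (wp act C f \<sigma>))))"
  using good_wp[OF assms, of C] unfolding good_def wmono_def by blast

end
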